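(* For every $x\in\Delta\setminus\partial\Delta$, $\nabla H\cdot F(x)=p(x)\ge0$, where $p(x)=\sum_{i,j,k\in\mathbb{V}:\,x_{ij},x_{ik}>0}\frac{x_{ij}x_{ik}}{x_i}(y_{ij}-y_{ik})^2$. In particular $H$ is a Lyapunov function on $\Delta\setminus\partial\Delta$ for the ODE $\dot x=F(x)$.
   Context: Let $G=(\mathbb{V},E)$ be a finite graph with adjacency $\sim$. Let $a_{ij}=a_{ji}\ge0$ ($>0$ only if $i\sim j$) and $p_{ij}=p_{ji}\in[0,1]$ ($=0$ if $i\not\sim j$), with some $a_{ij}p_{ij}>0$. Fix $h_1\in(0,1]$; $\Delta$ is the set of arrays $x=(x_{ij})_{i,j\in\mathbb{V}}$ with $x_{ij}=x_{ji}\ge0$, $x_{ij}=0$ if $i\not\sim j$, $\sum_{i,j}x_{ij}=1$, $\sum_{(i,j):a_{ij}p_{ij}>0}x_{ij}\ge h_1$; $x_i=\sum_jx_{ij}$. $\partial\Delta$: the $x\in\Delta$ such that some vertex $i$ having a neighbour $j$ with $a_{ij}p_{ij}>0$ has $\sum_{j:a_{ij}p_{ij}>0}x_{ij}=0$. $H(x)=\sum_{(i,j):x_{ij}>0}a_{ij}p_{ij}x_{ij}^2/(x_ix_j)$; $y_{ij}=a_{ij}p_{ij}x_{ij}/(x_ix_j)$ (weighted efficiency; $0$ if $a_{ij}p_{ij}=0$); $F(x)_{ij}=x_{ij}(y_{ij}-H(x))$ ($0$ if $x_{ij}=0$). Here $\nabla H=(\partial H/\partial x_{ij})_{i,j}$,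 where $H$ is regarded as a function of the variables $x_{ij}$ indexed by ordered pairs, $x_{ij}$ and $x_{ji}$ being treated as independent variables, with $x_i=\sum_jx_{ij}$; $\nabla H\cdot F=\sum_{i,j}\frac{\partial H}{\partial x_{ij}}F_{ij}$. *)

theory Defs
  imports "HOL-Analysis.Analysis"
begin

definition vtot :: "('v::finite \<Rightarrow> 'v \<Rightarrow> real) \<Rightarrow> 'v \<Rightarrow> real" where
  "vtot x i = (\<Sum>j\<in>UNIV. x i j)"

definition Hfun :: "('v::finite \<Rightarrow> 'v \<Rightarrow> real) \<Rightarrow> ('v \<Rightarrow> 'v \<Rightarrow> real) \<Rightarrow> ('v \<Rightarrow> 'v \<Rightarrow> real) \<Rightarrow> real" where
  "Hfun a p x = (\<Sum>(i,j)\<in>{(i,j). x i j > 0}. a i j * p i j * (x i j)^2 / (vtot x i * vtot x j))"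

definition yeff :: "('v::finite \<Rightarrow> 'v \<Rightarrow> real) \<Rightarrow> ('v \<Rightarrow> 'v \<Rightarrow> real) \<Rightarrow> ('v \<Rightarrow> 'v \<Rightarrow> real) \<Rightarrow> 'v \<Rightarrow> 'v \<Rightarrow> real" where
  "yeff a p x i j = (if a i j * p i j = 0 then 0 else a i j * p i j * x i j / (vtot x i * vtot x j))"

definition Ffield :: "('v::finite \<Rightarrow> 'v \<Rightarrow> real) \<Rightarrow> ('v \<Rightarrow> 'v \<Rightarrow> real) \<Rightarrow> ('v \<Rightarrow> 'v \<Rightarrow> real) \<Rightarrow> 'v \<Rightarrow> 'v \<Rightarrow> real" where
  "Ffield a p x i j = (if x i j = 0 then 0 else x i j * (yeff a p x i j - Hfun a p x))"

(* partial derivative of H w.r.t. the single variable x_ij (ordered pair; x_ji untouched) *)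
definition partialH :: "('v::finite \<Rightarrow> 'v \<Rightarrow> real) \<Rightarrow> ('v \<Rightarrow> 'v \<Rightarrow> real) \<Rightarrow> ('v \<Rightarrow> 'v \<Rightarrow> real) \<Rightarrow> 'v \<Rightarrow> 'v \<Rightarrow> real" where
  "partialH a p x i j = deriv (\<lambda>t. Hfun a p (x(i := (x i)(j := t)))) (x i j)"

definition gradH_dot_F :: "('v::finite \<Rightarrow> 'v \<Rightarrow> real) \<Rightarrow> ('v \<Rightarrow> 'v \<Rightarrow> real) \<Rightarrow> ('v \<Rightarrow> 'v \<Rightarrow> real) \<Rightarrow> real" where
  "gradH_dot_F a p x = (\<Sum>i\<in>UNIV. \<Sum>j\<in>UNIV. partialH a p x i j * Ffield a p x i j)"

definition pfun :: "('v::finite \<Rightarrow> 'v \<Rightarrow> real) \<Rightarrow> ('v \<Rightarrow> 'v \<Rightarrow> real) \<Rightarrow> ('v \<Rightarrow> 'v \<Rightarrow> real) \<Rightarrow> real" where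
  "pfun a p x = (\<Sum>(i,j,k)\<in>{(i,j,k). x i j > 0 \<and> x i k > 0}.
      x i j * x i k / vtot x i * (yeff a p x i j - yeff a p x i k)^2)"

definition inDelta :: "('v::finite \<Rightarrow> 'v \<Rightarrow> bool) \<Rightarrow> ('v \<Rightarrow> 'v \<Rightarrow> real) \<Rightarrow> ('v \<Rightarrow> 'v \<Rightarrow> real) \<Rightarrow> real \<Rightarrow> ('v \<Rightarrow> 'v \<Rightarrow> real) \<Rightarrow> bool" where
  "inDelta adj a p h1 x \<longleftrightarrow>
     (\<forall>i j. x i j = x j i) \<and> (\<forall>i j. x i j \<ge> 0) \<and> (\<forall>i j. \<not> adj i j \<longrightarrow> x i j = 0) \<and>
     (\<Sum>i\<in>UNIV. \<Sum>j\<in>UNIV. x i j) = 1 \<and>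
     (\<Sum>(i,j)\<in>{(i,j). a i j * p i j > 0}. x i j) \<ge> h1"

definition inBoundary :: "('v::finite \<Rightarrow> 'v \<Rightarrow> bool) \<Rightarrow> ('v \<Rightarrow> 'v \<Rightarrow> real) \<Rightarrow> ('v \<Rightarrow> 'v \<Rightarrow> real) \<Rightarrow> real \<Rightarrow> ('v \<Rightarrow> 'v \<Rightarrow> real) \<Rightarrow> bool" where
  "inBoundary adj a p h1 x \<longleftrightarrow> inDelta adj a p h1 x \<and>
     (\<exists>i. (\<exists>j. adj i j \<and> a i j * p i j > 0) \<and> (\<Sum>j\<in>{j. a i j * p i j > 0}. x i j) = 0)"

end

theory Submission imports Defs begin

lemma deriv_term:
  fixes c u0 \<alpha> A B \<beta> \<gamma> t0 :: real
  assumes "A > 0" "B > 0"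
  shows "((\<lambda>t. c*(u0+\<alpha>*(t-t0))^2/((A+\<beta>*(t-t0))*(B+\<gamma>*(t-t0)))) has_field_derivative
     c*(2*u0*\<alpha>*A*B - u0^2*(\<beta>*B+A*\<gamma>))/(A*B)^2) (at t0)"
  using assms
  apply (auto intro!: derivative_eq_intros)
  apply (simp add: field_simps power2_eq_square)
  done

lemma sum_pairs:
  fixes f :: "'v::finite \<Rightarrow> 'v \<Rightarrow> real"
  shows "(\<Sum>(k,l)\<in>{(k,l). P k l}. f k l) = (\<Sum>k\<in>UNIV. \<Sum>l\<in>UNIV. if P k l then f k l else 0)"
proof -
  have "(\<Sum>(k,l)\<in>{(k,l). P k l}. f k l) = (\<Sum>z\<in>{z\<in>UNIV. case_prod P z}. case_prod f z)"
    by (rule sum.cong) auto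
  also have "\<dots> = (\<Sum>z\<in>UNIV \<times> UNIV. if case_prod P z then case_prod f z else 0)"
    by (subst sum.inter_filter) auto
  also have "\<dots> = (\<Sum>(k,l)\<in>UNIV \<times> UNIV. if P k l then f k l else 0)"
    by (rule sum.cong) auto
  also have "\<dots> = (\<Sum>k\<in>UNIV. \<Sum>l\<in>UNIV. if P k l then f k l else 0)"
    by (rule sum.cartesian_product[symmetric])
  finally show ?thesis .
qed

lemma sum_triples:
  fixes f :: "'v::finite \<Rightarrow> 'v \<Rightarrow> 'v \<Rightarrow> real"
  shows "(\<Sum>(i,j,k)\<in>{(i,j,k). P i j k}. f i j k) = (\<Sum>i\<in>UNIV. \<Sum>j\<in>UNIV. \<Sum>k\<in>UNIV. if P i j k then f i j k else 0)"
proof -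
  have "(\<Sum>(i,j,k)\<in>{(i,j,k). P i j k}. f i j k) = (\<Sum>z\<in>{z\<in>UNIV. case_prod (\<lambda>i. case_prod (P i)) z}. case_prod (\<lambda>i. case_prod (f i)) z)"
    by (rule sum.cong) auto
  also have "\<dots> = (\<Sum>z\<in>UNIV \<times> (UNIV \<times> UNIV). if case_prod (\<lambda>i. case_prod (P i)) z then case_prod (\<lambda>i. case_prod (f i)) z else 0)"
    by (subst sum.inter_filter) auto
  also have "\<dots> = (\<Sum>(i,jk)\<in>UNIV \<times> (UNIV \<times> UNIV). (\<lambda>i (j,k). if P i j k then f i j k else 0) i jk)"
    by (rule sum.cong) auto
  also have "\<dots> = (\<Sum>i\<in>UNIV. \<Sum>jk\<in>UNIV \<times> UNIV. (\<lambda>(j,k). if P i j k then f i j k else 0) jk)"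
    by (rule sum.cartesian_product[symmetric])
  also have "\<dots> = (\<Sum>i\<in>UNIV. \<Sum>j\<in>UNIV. \<Sum>k\<in>UNIV. if P i j k then f i j k else 0)"
    by (simp add: sum.cartesian_product)
  finally show ?thesis .
qed

lemma quad_id:
  fixes w e :: "'a \<Rightarrow> real"
  assumes "finite A"
  shows "(\<Sum>j\<in>A. \<Sum>k\<in>A. w j * w k * (e j - e k)^2) = 2*(\<Sum>j\<in>A. w j)*(\<Sum>j\<in>A. w j * e j^2) - 2*(\<Sum>j\<in>A. w j * e j)^2"
proof -
  have "(\<Sum>j\<in>A. \<Sum>k\<in>A. w j * w k * (e j - e k)^2) =
     (\<Sum>j\<in>A. \<Sum>k\<in>A. w k * (w j * e j^2)) + (\<Sum>j\<in>A. \<Sum>k\<in>A. w j * (w k * e k^2)) - 2 * (\<Sum>j\<in>A. \<Sum>k\<in>A. (w j * e j) * (w k * e k))"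
    by (simp add: sum.distrib sum_subtractf sum_distrib_left power2_eq_square algebra_simps)
  also have "\<dots> = (\<Sum>k\<in>A. w k) * (\<Sum>j\<in>A. w j * e j^2) + (\<Sum>j\<in>A. w j) * (\<Sum>k\<in>A. w k * e k^2) - 2 * ((\<Sum>j\<in>A. w j * e j) * (\<Sum>k\<in>A. w k * e k))"
  proof -
    have "(\<Sum>j\<in>A. \<Sum>k\<in>A. w k * (w j * e j^2)) = (\<Sum>k\<in>A. w k) * (\<Sum>j\<in>A. w j * e j^2)"
      by (subst sum_product) (rule sum.swap)
    moreover have "(\<Sum>j\<in>A. \<Sum>k\<in>A. w j * (w k * e k^2)) = (\<Sum>j\<in>A. w j) * (\<Sum>k\<in>A. w k * e k^2)"
      by (rule sum_product[symmetric])
    moreover have "(\<Sum>j\<in>A. \<Sum>k\<in>A. (w j * e j) * (w k * e k)) = (\<Sum>j\<in>A. w j * e j) * (\<Sum>k\<in>A. w k * e k)"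
      by (rule sum_product[symmetric])
    ultimately show ?thesis by simp
  qed
  also have "\<dots> = 2*(\<Sum>j\<in>A. w j)*(\<Sum>j\<in>A. w j * e j^2) - 2*(\<Sum>j\<in>A. w j * e j)^2"
    by (simp add: power2_eq_square)
  finally show ?thesis .
qed

theorem proposition2:
  fixes adj :: "'v::finite \<Rightarrow> 'v \<Rightarrow> bool"
    and a p x :: "'v \<Rightarrow> 'v \<Rightarrow> real" and h1 :: real
  assumes adj_sym: "\<And>i j. adj i j \<longleftrightarrow> adj j i"
    and a_sym: "\<And>i j. a i j = a j i" and a_nonneg: "\<And>i j. a i j \<ge> 0"
    and a_adj: "\<And>i j. a i j > 0 \<Longrightarrow> adj i j"
    and p_sym: "\<And>i j. p i j = p j i" and p_range: "\<And>i j. 0 \<le> p i j \<and> p i j \<le> 1"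
    and p_adj: "\<And>i j. \<not> adj i j \<Longrightarrow> p i j = 0"
    and ap_pos: "\<exists>i j. a i j * p i j > 0"
    and h1: "0 < h1" "h1 \<le> 1"
    and x_in: "inDelta adj a p h1 x" and x_notbd: "\<not> inBoundary adj a p h1 x"
  shows "gradH_dot_F a p x = pfun a p x \<and> pfun a p x \<ge> 0"
proof -
  from x_in have xs: "\<And>i j. x i j = x j i" and x0: "\<And>i j. x i j \<ge> 0"
    by (auto simp: inDelta_def)
  define X where "X = vtot x"
  define y where "y = yeff a p x"
  define H where "H = Hfun a p x"
  define m where "m i = (\<Sum>l\<in>UNIV. x i l * y i l) / X i" for i
  have Xge: "x k l \<le> X k" for k l
    unfolding X_def vtot_def by (rule member_le_sum) (auto simp: x0)
  have X0: "X k \<ge> 0" for k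
    unfolding X_def vtot_def by (rule sum_nonneg) (simp add: x0)
  have yval: "y k l = a k l * p k l * x k l / (X k * X l)" for k l
    by (simp add: y_def yeff_def X_def)
  have pd: "partialH a p x i j = 2 * y i j - 2 * m i" if xij: "x i j > 0" for i j
  proof -
    define S where "S = {(k,l). x k l > 0}"
    define al where "al k l = (if k = i \<and> l = j then 1 else 0::real)" for k l
    define be where "be k = (if k = i then 1 else 0::real)" for k
    define D where "D = (\<Sum>(k,l)\<in>S. a k l * p k l * (2*x k l*al k l*X k*X l - (x k l)^2*(be k*X l + X k*be l))/(X k*X l)^2)"
    define G where "G t = (\<Sum>(k,l)\<in>S. a k l * p k l * (x k l + al k l*(t - x i j))^2/((X k + be k*(t - x i j))*(X l + be l*(t - x i j))))" for t
    have Xpos: "X k > 0" "X l > 0" if "(k,l) \<in> S" for k l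
      using that Xge[of k l] Xge[of l k] xs[of k l] by (auto simp: S_def)
    have dG: "(G has_field_derivative D) (at (x i j))"
      unfolding G_def D_def
      apply (rule DERIV_sum)
      subgoal for z by (cases z) (simp add: deriv_term[OF Xpos(1) Xpos(2)])
      done
    define x' where "x' t = x(i := (x i)(j := t))" for t
    have x'v: "x' t k l = x k l + al k l * (t - x i j)" for t k l
      by (simp add: x'_def al_def)
    have vt: "vtot (x' t) k = X k + be k * (t - x i j)" for t k
    proof -
      have "vtot (x' t) k = (\<Sum>l\<in>UNIV. x k l + (if l = j then be k * (t - x i j) else 0))"
        unfolding vtot_def by (intro sum.cong refl) (simp add: x'v al_def be_def)
      then show ?thesis by (simp add: sum.distrib X_def vtot_def)
    qed
    have HG: "Hfun a p (x' t) = G t" if "t > 0" for t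
    proof -
      have "{(k,l). x' t k l > 0} = S" using that xij by (auto simp: S_def x'_def fun_upd_apply split: if_splits)
      then show ?thesis unfolding Hfun_def G_def by (simp add: x'v vt)
    qed
    have "((\<lambda>t. Hfun a p (x' t)) has_field_derivative D) (at (x i j))"
      by (rule has_field_derivative_transform_within_open[OF dG, of "{0<..}"]) (use xij HG in auto)
    then have pD: "partialH a p x i j = D" unfolding partialH_def x'_def by (rule DERIV_imp_deriv)
    have tm: "(if x k l > 0 then a k l * p k l * (2*x k l*al k l*X k*X l - (x k l)^2*(be k*X l + X k*be l))/(X k*X l)^2 else 0)
       = (if k = i \<and> l = j then 2 * y i j else 0) - (if k = i then x i l * y i l / X i else 0) - (if l = i then x i k * y i k / X i else 0)" for k l
    proof (cases "x k l > 0")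
      case False
      then have "x k l = 0" using x0[of k l] by simp
      then show ?thesis using False xij xs[of k l] by auto
    next
      case True
      then have P: "X k > 0" "X l > 0" using Xpos[of k l] by (auto simp: S_def)
      show ?thesis using True P xs[of k l] a_sym[of k l] p_sym[of k l] unfolding al_def be_def
        by (auto simp: yval field_simps power2_eq_square)
    qed
    have "D = (\<Sum>k\<in>UNIV. \<Sum>l\<in>UNIV. (if k = i \<and> l = j then 2 * y i j else 0) - (if k = i then x i l * y i l / X i else 0) - (if l = i then x i k * y i k / X i else 0))"
      unfolding D_def S_def sum_pairs tm ..
    also have "\<dots> = 2 * y i j - m i - m i"
    proof -
      have e1: "(\<Sum>l\<in>UNIV. if k = i \<and> l = j then 2 * y i j else 0) = (if k = i then 2 * y i j else 0)" for k
        by (cases "k = i") auto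
      have e2: "(\<Sum>l\<in>UNIV. if k = i then x i l * y i l / X i else 0) = (if k = i then (\<Sum>l\<in>UNIV. x i l * y i l / X i) else 0)" for k
        by (cases "k = i") auto
      show ?thesis by (simp add: e1 e2 sum_subtractf m_def sum_divide_distrib)
    qed
    finally show ?thesis using pD by simp
  qed
  have gF: "partialH a p x i j * Ffield a p x i j = 2 * x i j * (y i j - m i) * (y i j - H)" for i j
  proof (cases "x i j = 0")
    case True then show ?thesis by (simp add: Ffield_def)
  next
    case False
    then have "x i j > 0" using x0[of i j] by simp
    then show ?thesis using False pd[of i j] by (simp add: Ffield_def y_def H_def)
  qed
  have row: "(\<Sum>j\<in>UNIV. 2 * x i j * (y i j - m i) * (y i j - H)) = (\<Sum>j\<in>UNIV. \<Sum>k\<in>UNIV. x i j * x i k / X i * (y i j - y i k)^2)" for i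
  proof (cases "X i = 0")
    case True
    then have "x i j = 0" for j using x0 unfolding X_def vtot_def by (simp add: sum_nonneg_eq_0_iff)
    then show ?thesis by simp
  next
    case False
    define e where "e j = y i j - m i" for j
    have s0: "(\<Sum>j\<in>UNIV. x i j * e j) = 0"
    proof -
      have "(\<Sum>j\<in>UNIV. x i j * e j) = (\<Sum>j\<in>UNIV. x i j * y i j) - (\<Sum>j\<in>UNIV. x i j) * m i"
        unfolding e_def by (simp add: right_diff_distrib sum_subtractf sum_distrib_right)
      also have "(\<Sum>j\<in>UNIV. x i j) = X i" by (simp add: X_def vtot_def)
      finally show ?thesis using False by (simp add: m_def)
    qed
    have "(\<Sum>j\<in>UNIV. 2 * x i j * (y i j - m i) * (y i j - H)) = (\<Sum>j\<in>UNIV. 2 * (x i j * e j^2) + 2 * (m i - H) * (x i j * e j))"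
      by (intro sum.cong refl) (simp add: e_def power2_eq_square algebra_simps)
    also have "\<dots> = 2 * (\<Sum>j\<in>UNIV. x i j * e j^2)"
      using s0 by (simp add: sum.distrib sum_distrib_left[symmetric])
    also have "\<dots> = (\<Sum>j\<in>UNIV. \<Sum>k\<in>UNIV. x i j * x i k * (e j - e k)^2) / X i"
      using False s0 by (simp add: quad_id X_def vtot_def)
    also have "\<dots> = (\<Sum>j\<in>UNIV. \<Sum>k\<in>UNIV. x i j * x i k / X i * (y i j - y i k)^2)"
      by (simp add: sum_divide_distrib e_def)
    finally show ?thesis .
  qed
  have pf: "pfun a p x = (\<Sum>i\<in>UNIV. \<Sum>j\<in>UNIV. \<Sum>k\<in>UNIV. x i j * x i k / X i * (y i j - y i k)^2)"
  proof -
    have "pfun a p x = (\<Sum>i\<in>UNIV. \<Sum>j\<in>UNIV. \<Sum>k\<in>UNIV. if x i j > 0 \<and> x i k > 0 then x i j * x i k / X i * (y i j - y i k)^2 else 0)"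
      unfolding pfun_def sum_triples X_def y_def ..
    also have "\<dots> = (\<Sum>i\<in>UNIV. \<Sum>j\<in>UNIV. \<Sum>k\<in>UNIV. x i j * x i k / X i * (y i j - y i k)^2)"
    proof (intro sum.cong refl)
      fix i j k
      show "(if x i j > 0 \<and> x i k > 0 then x i j * x i k / X i * (y i j - y i k)^2 else 0) = x i j * x i k / X i * (y i j - y i k)^2"
        using x0[of i j] x0[of i k] by auto
    qed
    finally show ?thesis .
  qed
  have "gradH_dot_F a p x = pfun a p x"
    unfolding gradH_dot_F_def gF pf row ..
  moreover have "pfun a p x \<ge> 0"
    unfolding pf by (intro sum_nonneg) (simp add: x0 X0)
  ultimately show ?thesis by simp
qed
end
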